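(* Let $k\ge2$. Then $\operatorname{ZIR}(N_k)=2k=\frac12|V(N_k)|$.
   Context: The $k$th necklace $N_k$: take $k$ disjoint diamonds (a diamond is $K_4$ minus an edge), the $i$th having vertices $a_i,b_i,c_i,d_i$ with all edges among them except $a_ic_i$; add the edges $c_ia_{i+1}$ for $1\le i\le k-1$ and $c_ka_1$. A nonempty $F\subseteq V(G)$ is a fort if every $v\notin F$ has $|N(v)\cap F|\ne1$. A private fort of $x\in S$ relative to $S$ is a fort $F$ with $S\cap F=\{x\}$; $S$ is a ZIr-set if every element of $S$ has a private fort. $\operatorname{ZIR}(G)$ is the maximum cardinality of an inclusion-maximal ZIr-set. *)

theory Defs
  imports Main
begin

text \<open>A (finite simple) graph is given by a vertex set V and a symmetric,
irreflexive adjacency relation E (with edges only inside V).\<close>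

definition nbhd :: "('a \<Rightarrow> 'a \<Rightarrow> bool) \<Rightarrow> 'a \<Rightarrow> 'a set" where
  "nbhd E v = {u. E v u}"

definition is_fort :: "'a set \<Rightarrow> ('a \<Rightarrow> 'a \<Rightarrow> bool) \<Rightarrow> 'a set \<Rightarrow> bool" where
  "is_fort V E F \<longleftrightarrow> F \<noteq> {} \<and> F \<subseteq> V \<and>
     (\<forall>v \<in> V - F. card (nbhd E v \<inter> F) \<noteq> 1)"

definition private_fort :: "'a set \<Rightarrow> ('a \<Rightarrow> 'a \<Rightarrow> bool) \<Rightarrow> 'a set \<Rightarrow> 'a \<Rightarrow> 'a set \<Rightarrow> bool" where
  "private_fort V E S x F \<longleftrightarrow> is_fort V E F \<and> S \<inter> F = {x}"

definition zir_set :: "'a set \<Rightarrow> ('a \<Rightarrow> 'a \<Rightarrow> bool) \<Rightarrow> 'a set \<Rightarrow> bool" where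
  "zir_set V E S \<longleftrightarrow> S \<subseteq> V \<and> (\<forall>x \<in> S. \<exists>F. private_fort V E S x F)"

definition maximal_zir_set :: "'a set \<Rightarrow> ('a \<Rightarrow> 'a \<Rightarrow> bool) \<Rightarrow> 'a set \<Rightarrow> bool" where
  "maximal_zir_set V E S \<longleftrightarrow> zir_set V E S \<and>
     (\<forall>T. zir_set V E T \<and> S \<subseteq> T \<longrightarrow> T = S)"

definition ZIR :: "'a set \<Rightarrow> ('a \<Rightarrow> 'a \<Rightarrow> bool) \<Rightarrow> nat" where
  "ZIR V E = Max {card S | S. maximal_zir_set V E S}"

text \<open>The necklace N_k: vertex (i,j) with i<k is the j-th vertex of diamond i,
 where j = 0,1,2,3 stands for a_i, b_i, c_i, d_i (diamonds indexed 0..k-1).\<close>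

definition necklace_V :: "nat \<Rightarrow> (nat \<times> nat) set" where
  "necklace_V k = {..<k} \<times> {..<4}"

definition necklace_E :: "nat \<Rightarrow> nat \<times> nat \<Rightarrow> nat \<times> nat \<Rightarrow> bool" where
  "necklace_E k p q \<longleftrightarrow> p \<in> necklace_V k \<and> q \<in> necklace_V k \<and>
     ((fst p = fst q \<and> snd p \<noteq> snd q \<and> {snd p, snd q} \<noteq> {0, 2}) \<or>
      (snd p = 2 \<and> snd q = 0 \<and> fst q = (fst p + 1) mod k) \<or>
      (snd p = 0 \<and> snd q = 2 \<and> fst p = (fst q + 1) mod k))"

end

theory Submission imports Defs begin

definition nx :: "nat \<Rightarrow> nat \<Rightarrow> nat" where "nx k i = (i + 1) mod k"
definition pv :: "nat \<Rightarrow> nat \<Rightarrow> nat" where "pv k i = (if i = 0 then k - 1 else i - 1)"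

lemma nx_lt: "k \<ge> 2 \<Longrightarrow> nx k i < k" by (simp add: nx_def)
lemma pv_lt: "k \<ge> 2 \<Longrightarrow> i < k \<Longrightarrow> pv k i < k" by (auto simp add: pv_def)
lemma nx_ne: "k \<ge> 2 \<Longrightarrow> i < k \<Longrightarrow> nx k i \<noteq> i"
  unfolding nx_def by (cases "i+1=k") auto
lemma pv_ne: "k \<ge> 2 \<Longrightarrow> i < k \<Longrightarrow> pv k i \<noteq> i"
  unfolding pv_def by auto
lemma nx_pv_iff: "k \<ge> 2 \<Longrightarrow> i < k \<Longrightarrow> j < k \<Longrightarrow> (i = nx k j) = (j = pv k i)"
  unfolding nx_def pv_def
  by (cases "j + 1 = k") auto
lemma nx_pv: "k \<ge> 2 \<Longrightarrow> i < k \<Longrightarrow> nx k (pv k i) = i"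
  unfolding nx_def pv_def by auto
lemma pv_nx: "k \<ge> 2 \<Longrightarrow> i < k \<Longrightarrow> pv k (nx k i) = i"
  unfolding nx_def pv_def by (cases "i+1=k") auto

lemma E_iff: "necklace_E k (i,s) (j,t) \<longleftrightarrow> i<k \<and> s<4 \<and> j<k \<and> t<4 \<and>
  ((i=j \<and> s\<noteq>t \<and> {s,t}\<noteq>{0,2}) \<or> (s=2 \<and> t=0 \<and> j = nx k i) \<or> (s=0 \<and> t=2 \<and> i = nx k j))"
  unfolding necklace_E_def necklace_V_def nx_def by auto

lemma E0: assumes k: "k \<ge> 2" "i < k"
  shows "necklace_E k (i,0) (j,u) \<longleftrightarrow> (j = i \<and> (u=1 \<or> u=3)) \<or> (j = pv k i \<and> u = 2)"
proof
  assume "necklace_E k (i,0) (j,u)"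
  then have h: "j<k" "u<4" "(i=j \<and> 0\<noteq>u \<and> u\<noteq>2) \<or> (u=2 \<and> i = nx k j)"
    by (auto simp: E_iff doubleton_eq_iff)
  show "(j = i \<and> (u=1 \<or> u=3)) \<or> (j = pv k i \<and> u = 2)"
  proof (cases "u = 2")
    case True
    then have "i = nx k j" using h by auto
    then have "j = pv k i" using nx_pv_iff[of k i j] k h(1) by blast
    then show ?thesis using True by blast
  next
    case False
    then show ?thesis using h by auto
  qed
next
  assume h: "(j = i \<and> (u=1 \<or> u=3)) \<or> (j = pv k i \<and> u = 2)"
  show "necklace_E k (i,0) (j,u)"
  proof (cases "u = 2")
    case True
    then have j: "j = pv k i" using h by auto
    then have "i = nx k j" using nx_pv_iff[of k i j] k pv_lt[of k i] by blast
    then show ?thesis using True j k pv_lt[of k i] by (simp add: E_iff)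
  next
    case False
    then show ?thesis using h k by (auto simp: E_iff doubleton_eq_iff)
  qed
qed

lemma E2: assumes k: "k \<ge> 2" "i < k"
  shows "necklace_E k (i,2) (j,u) \<longleftrightarrow> (j = i \<and> (u=1 \<or> u=3)) \<or> (j = nx k i \<and> u = 0)"
  using k nx_lt[of k i] by (auto simp: E_iff doubleton_eq_iff)

lemma E1: assumes k: "k \<ge> 2" "i < k"
  shows "necklace_E k (i,1) (j,u) \<longleftrightarrow> (j = i \<and> (u=0 \<or> u=2 \<or> u=3))"
  using k by (auto simp: E_iff doubleton_eq_iff)

lemma E3: assumes k: "k \<ge> 2" "i < k"
  shows "necklace_E k (i,3) (j,u) \<longleftrightarrow> (j = i \<and> (u=0 \<or> u=1 \<or> u=2))"
  using k by (auto simp: E_iff doubleton_eq_iff)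

lemma nb0: "k \<ge> 2 \<Longrightarrow> i < k \<Longrightarrow> nbhd (necklace_E k) (i,0) = {(i,1),(i,3),(pv k i,2)}"
  unfolding nbhd_def by (auto simp: E0)
lemma nb2: "k \<ge> 2 \<Longrightarrow> i < k \<Longrightarrow> nbhd (necklace_E k) (i,2) = {(i,1),(i,3),(nx k i,0)}"
  unfolding nbhd_def by (auto simp: E2)
lemma nb1: "k \<ge> 2 \<Longrightarrow> i < k \<Longrightarrow> nbhd (necklace_E k) (i,1) = {(i,0),(i,2),(i,3)}"
  unfolding nbhd_def by (auto simp: E1[simplified])
lemma nb3: "k \<ge> 2 \<Longrightarrow> i < k \<Longrightarrow> nbhd (necklace_E k) (i,3) = {(i,0),(i,1),(i,2)}"
  unfolding nbhd_def by (auto simp: E3)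


definition dia :: "nat \<Rightarrow> (nat \<times> nat) set" where "dia j = {j} \<times> {..<4}"

lemma dia_fin[simp]: "finite (dia j)" by (simp add: dia_def)
lemma dia_card: "card (dia j) = 4" by (simp add: dia_def card_cartesian_product)
lemma dia_disj: "i \<noteq> j \<Longrightarrow> dia i \<inter> dia j = {}" by (auto simp: dia_def)
lemma in_dia: "(a,b) \<in> dia j \<longleftrightarrow> a = j \<and> b < 4" by (auto simp: dia_def)

lemma fort_prop: "is_fort V E F \<Longrightarrow> v \<in> V \<Longrightarrow> v \<notin> F \<Longrightarrow> card (nbhd E v \<inter> F) \<noteq> 1"
  by (auto simp: is_fort_def)

lemma inV: "j < k \<Longrightarrow> s < 4 \<Longrightarrow> (j,s) \<in> necklace_V k" by (simp add: necklace_V_def)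

lemma single:
  assumes k: "k \<ge> 2" "j < k" and F: "is_fort (necklace_V k) (necklace_E k) F"
  shows "F \<inter> dia j \<noteq> {v}"
proof
  assume h: "F \<inter> dia j = {v}"
  then have vd: "v \<in> dia j" by auto
  then obtain t where v: "v = (j,t)" "t<4" by (auto simp: dia_def)
  have inF: "\<And>s. s<4 \<Longrightarrow> (j,s) \<in> F \<longleftrightarrow> s = t"
  proof -
    fix s :: nat assume s: "s < 4"
    have "(j,s) \<in> F \<longleftrightarrow> (j,s) \<in> F \<inter> dia j" using s by (simp add: in_dia)
    also have "\<dots> \<longleftrightarrow> s = t" using h v by auto
    finally show "(j,s) \<in> F \<longleftrightarrow> s = t" .
  qed
  show False
  proof (cases "t = 1")
    case True
    have n: "(j,3) \<notin> F" using inF True by auto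
    have "nbhd (necklace_E k) (j,3) \<inter> F = {(j,1)}" using nb3[OF k] inF[of 0] inF[of 1] inF[of 2] True by auto
    then show False using fort_prop[OF F inV[OF k(2), of 3] n] by simp
  next
    case False
    have n: "(j,1) \<notin> F" using inF False by auto
    have "nbhd (necklace_E k) (j,1) \<inter> F = {(j,t)}" using nb1[OF k] inF[of 0] inF[of 2] inF[of 3] False v(2) by auto
    then show False using fort_prop[OF F inV[OF k(2), of 1] n] by simp
  qed
qed

lemma empty_nb:
  assumes k: "k \<ge> 2" "j < k" and F: "is_fort (necklace_V k) (necklace_E k) F"
    and e: "F \<inter> dia j = {}"
  shows "(pv k j, 2) \<notin> F" "(nx k j, 0) \<notin> F"
proof -
  have a: "(j,0)\<notin>F" "(j,1)\<notin>F" "(j,2)\<notin>F" "(j,3)\<notin>F" using e by (auto simp: dia_def)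
  show "(pv k j,2)\<notin>F"
  proof
    assume p: "(pv k j,2)\<in>F"
    then have "nbhd (necklace_E k) (j,0) \<inter> F = {(pv k j,2)}" using nb0[OF k] a by auto
    then show False using fort_prop[OF F inV[OF k(2), of 0] a(1)] by simp
  qed
  show "(nx k j,0)\<notin>F"
  proof
    assume p: "(nx k j,0)\<in>F"
    then have "nbhd (necklace_E k) (j,2) \<inter> F = {(nx k j,0)}" using nb2[OF k] a by auto
    then show False using fort_prop[OF F inV[OF k(2), of 2] a(3)] by simp
  qed
qed

lemma bd_in0:
  assumes k: "k \<ge> 2" "j < k" and F: "is_fort (necklace_V k) (necklace_E k) F"
    and a: "(j,0)\<notin>F" "(pv k j,2)\<notin>F" and ne: "F \<inter> dia j \<noteq> {}"
  shows "(j,1)\<in>F \<and> (j,3)\<in>F"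
proof -
  have c: "card (nbhd (necklace_E k) (j,0) \<inter> F) \<noteq> 1" using fort_prop[OF F inV[OF k(2), of 0] a(1)] by simp
  have eq: "nbhd (necklace_E k) (j,0) \<inter> F = {(j,1),(j,3)} \<inter> F" using nb0[OF k] a by auto
  have 1: "\<not> ((j,1)\<in>F \<and> (j,3)\<notin>F)"
  proof
    assume "(j,1)\<in>F \<and> (j,3)\<notin>F"
    then have "{(j,1),(j,3)} \<inter> F = {(j,1)}" by auto
    then show False using c eq by simp
  qed
  have 3: "\<not> ((j,3)\<in>F \<and> (j,1)\<notin>F)"
  proof
    assume "(j,3)\<in>F \<and> (j,1)\<notin>F"
    then have "{(j,1),(j,3)} \<inter> F = {(j,3)}" by auto
    then show False using c eq by simp
  qed
  have 0: "\<not> ((j,1)\<notin>F \<and> (j,3)\<notin>F)"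
  proof
    assume h: "(j,1)\<notin>F \<and> (j,3)\<notin>F"
    have "F \<inter> dia j \<subseteq> {(j,2)}"
    proof
      fix v assume "v \<in> F \<inter> dia j"
      then obtain s where s: "v = (j,s)" "s < 4" "(j,s) \<in> F" by (auto simp: dia_def)
      have "s \<noteq> 1" using h s(3) by (cases "s = 1") auto
      moreover have "s \<noteq> 3" using h s(3) by (cases "s = 3") auto
      moreover have "s \<noteq> 0" using a(1) s(3) by (cases "s = 0") auto
      ultimately have "s = 2" using s(2) by arith
      then show "v \<in> {(j,2)}" using s(1) by simp
    qed
    then have "F \<inter> dia j = {(j,2)}" using ne by blast
    then show False using single[OF k F] by blast
  qed
  show ?thesis using 1 3 0 by blast
qed

lemma bd_in2:
  assumes k: "k \<ge> 2" "j < k" and F: "is_fort (necklace_V k) (necklace_E k) F"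
    and a: "(j,2)\<notin>F" "(nx k j,0)\<notin>F" and ne: "F \<inter> dia j \<noteq> {}"
  shows "(j,1)\<in>F \<and> (j,3)\<in>F"
proof -
  have c: "card (nbhd (necklace_E k) (j,2) \<inter> F) \<noteq> 1" using fort_prop[OF F inV[OF k(2), of 2] a(1)] by simp
  have eq: "nbhd (necklace_E k) (j,2) \<inter> F = {(j,1),(j,3)} \<inter> F" using nb2[OF k] a by auto
  have 1: "\<not> ((j,1)\<in>F \<and> (j,3)\<notin>F)"
  proof
    assume "(j,1)\<in>F \<and> (j,3)\<notin>F"
    then have "{(j,1),(j,3)} \<inter> F = {(j,1)}" by auto
    then show False using c eq by simp
  qed
  have 3: "\<not> ((j,3)\<in>F \<and> (j,1)\<notin>F)"
  proof
    assume "(j,3)\<in>F \<and> (j,1)\<notin>F"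
    then have "{(j,1),(j,3)} \<inter> F = {(j,3)}" by auto
    then show False using c eq by simp
  qed
  have 0: "\<not> ((j,1)\<notin>F \<and> (j,3)\<notin>F)"
  proof
    assume h: "(j,1)\<notin>F \<and> (j,3)\<notin>F"
    have "F \<inter> dia j \<subseteq> {(j,0)}"
    proof
      fix v assume "v \<in> F \<inter> dia j"
      then obtain s where s: "v = (j,s)" "s < 4" "(j,s) \<in> F" by (auto simp: dia_def)
      have "s \<noteq> 1" using h s(3) by (cases "s = 1") auto
      moreover have "s \<noteq> 3" using h s(3) by (cases "s = 3") auto
      moreover have "s \<noteq> 2" using a(1) s(3) by (cases "s = 2") auto
      ultimately have "s = 0" using s(2) by arith
      then show "v \<in> {(j,0)}" using s(1) by simp
    qed
    then have "F \<inter> dia j = {(j,0)}" using ne by blast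
    then show False using single[OF k F] by blast
  qed
  show ?thesis using 1 3 0 by blast
qed


lemma zirD: "zir_set V E S \<Longrightarrow> x \<in> S \<Longrightarrow> \<exists>F. is_fort V E F \<and> S \<inter> F = {x}"
  by (auto simp: zir_set_def private_fort_def)

lemma le3:
  assumes k: "k \<ge> 2" "j < k" and Z: "zir_set (necklace_V k) (necklace_E k) S"
  shows "card (S \<inter> dia j) \<le> 3"
proof (rule ccontr)
  assume "\<not> card (S \<inter> dia j) \<le> 3"
  moreover have "card (S \<inter> dia j) \<le> 4" using card_mono[of "dia j" "S \<inter> dia j"] dia_card by auto
  ultimately have "card (S \<inter> dia j) = card (dia j)" using dia_card by simp
  then have "S \<inter> dia j = dia j" using card_subset_eq[of "dia j" "S \<inter> dia j"] by auto
  moreover have x2: "(j,0) \<in> dia j" by (simp add: in_dia)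
  ultimately have x: "(j,0) \<in> S" "(j,0) \<in> dia j" by blast+
  obtain F where F: "is_fort (necklace_V k) (necklace_E k) F" "S \<inter> F = {(j,0)}"
    using zirD[OF Z x(1)] by blast
  have "F \<inter> dia j \<subseteq> S \<inter> F" using \<open>S \<inter> dia j = dia j\<close> by blast
  then have "F \<inter> dia j = {(j,0)}" using F(2) x by auto
  then show False using single[OF k F(1)] by blast
qed

lemma big_empty:
  assumes k: "k \<ge> 2" "i < k" and F: "is_fort (necklace_V k) (necklace_E k) F"
    and c: "card (S \<inter> dia i) \<ge> 3" and x: "x \<notin> dia i" and SF: "S \<inter> F = {x}"
  shows "F \<inter> dia i = {}"
proof -
  have sub: "F \<inter> dia i \<subseteq> dia i - (S \<inter> dia i)" using x SF by auto
  have "card (dia i - (S \<inter> dia i)) = 4 - card (S \<inter> dia i)"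
    using card_Diff_subset[of "S \<inter> dia i" "dia i"] dia_card by auto
  then have "card (F \<inter> dia i) \<le> 1" using card_mono[OF _ sub] c by auto
  moreover have "card (F \<inter> dia i) \<noteq> 1"
  proof
    assume "card (F \<inter> dia i) = 1"
    then obtain v where "F \<inter> dia i = {v}" using card_1_singletonE by blast
    then show False using single[OF k F] by blast
  qed
  ultimately have "card (F \<inter> dia i) = 0" by arith
  then show ?thesis by simp
qed

lemma count:
  assumes t: "t = 0 \<or> t = 2"
    and h: "\<And>x. x \<in> S \<inter> dia j \<Longrightarrow> \<exists>F. S \<inter> F = {x} \<and> (j,1)\<in>F \<and> (j,3)\<in>F \<and> (j,t)\<notin>F"
  shows "card (S \<inter> dia j) \<le> 1"
proof -
  have "\<forall>x\<in>S \<inter> dia j. \<forall>y\<in>S \<inter> dia j. x = y"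
  proof (intro ballI)
    fix x y assume x: "x \<in> S \<inter> dia j" and y: "y \<in> S \<inter> dia j"
    obtain Fx where Fx: "S \<inter> Fx = {x}" "(j,1)\<in>Fx" "(j,3)\<in>Fx" "(j,t)\<notin>Fx" using h[OF x] by blast
    obtain Fy where Fy: "S \<inter> Fy = {y}" "(j,1)\<in>Fy" "(j,3)\<in>Fy" "(j,t)\<notin>Fy" using h[OF y] by blast
    show "x = y"
    proof (rule ccontr)
      assume ne: "x \<noteq> y"
      have y13: "y \<notin> {(j,1),(j,3)}"
      proof
        assume "y \<in> {(j,1),(j,3)}"
        then have "y \<in> Fx" using Fx(2,3) by auto
        then have "y \<in> S \<inter> Fx" using y by simp
        then have "y = x" using Fx(1) by simp
        then show False using ne by simp
      qed
      have x13: "x \<notin> {(j,1),(j,3)}"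
      proof
        assume "x \<in> {(j,1),(j,3)}"
        then have "x \<in> Fy" using Fy(2,3) by auto
        then have "x \<in> S \<inter> Fy" using x by simp
        then have "x = y" using Fy(1) by simp
        then show False using ne by simp
      qed
      have "x \<in> S \<inter> Fx" using Fx(1) by simp
      then have xt: "x \<noteq> (j,t)" using Fx(4) by auto
      have "y \<in> S \<inter> Fy" using Fy(1) by simp
      then have yt: "y \<noteq> (j,t)" using Fy(4) by auto
      obtain sx where sx: "x = (j,sx)" "sx < 4" using x by (auto simp: dia_def)
      obtain sy where sy: "y = (j,sy)" "sy < 4" using y by (auto simp: dia_def)
      have "sx \<noteq> 1" "sx \<noteq> 3" "sx \<noteq> t" using x13 xt sx(1) by auto
      then have "sx = 2 - t" using sx(2) t by arith
      moreover have "sy \<noteq> 1" "sy \<noteq> 3" "sy \<noteq> t" using y13 yt sy(1) by auto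
      then have "sy = 2 - t" using sy(2) t by arith
      ultimately show False using ne sx sy by simp
    qed
  qed
  then show ?thesis using card_le_Suc0_iff_eq[of "S \<inter> dia j"] by auto
qed

lemma pair:
  assumes k: "k \<ge> 2" "i < k" and Z: "zir_set (necklace_V k) (necklace_E k) S"
  shows "card (S \<inter> dia i) + card (S \<inter> dia (nx k i)) \<le> 4"
proof (rule ccontr)
  let ?i = "nx k i"
  have i': "?i < k" using nx_lt[OF k(1)] .
  have ne: "?i \<noteq> i" using nx_ne[OF k] .
  have pvi: "pv k ?i = i" using pv_nx[OF k] .
  assume "\<not> ?thesis"
  moreover have "card (S \<inter> dia i) \<le> 3" "card (S \<inter> dia ?i) \<le> 3" using le3[OF k Z] le3[OF k(1) i' Z] by auto
  ultimately consider "card (S \<inter> dia i) \<ge> 3" "card (S \<inter> dia ?i) \<ge> 2"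
    | "card (S \<inter> dia ?i) \<ge> 3" "card (S \<inter> dia i) \<ge> 2" by arith
  then show False
  proof cases
    case 1
    have "card (S \<inter> dia ?i) \<le> 1"
    proof (rule count[where t=0])
      fix x assume x: "x \<in> S \<inter> dia ?i"
      obtain F where F: "is_fort (necklace_V k) (necklace_E k) F" "S \<inter> F = {x}"
        using zirD[OF Z] x by blast
      have xi: "x \<notin> dia i" using x dia_disj[OF ne] by blast
      have e: "F \<inter> dia i = {}" using big_empty[OF k F(1) 1(1) xi F(2)] .
      have a0: "(?i,0) \<notin> F" using empty_nb(2)[OF k F(1) e] .
      have a2: "(pv k ?i,2) \<notin> F" using e pvi by (auto simp: dia_def)
      have nonE: "F \<inter> dia ?i \<noteq> {}" using x F(2) by blast
      have "(?i,1)\<in>F \<and> (?i,3)\<in>F" using bd_in0[OF k(1) i' F(1) a0 a2 nonE] .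
      then show "\<exists>F. S \<inter> F = {x} \<and> (?i,1)\<in>F \<and> (?i,3)\<in>F \<and> (?i,0)\<notin>F" using F(2) a0 by blast
    qed simp
    then show False using 1 by simp
  next
    case 2
    have "card (S \<inter> dia i) \<le> 1"
    proof (rule count[where t=2])
      fix x assume x: "x \<in> S \<inter> dia i"
      obtain F where F: "is_fort (necklace_V k) (necklace_E k) F" "S \<inter> F = {x}"
        using zirD[OF Z] x by blast
      have xi: "x \<notin> dia ?i" using x dia_disj[OF ne] by blast
      have e: "F \<inter> dia ?i = {}" using big_empty[OF k(1) i' F(1) 2(1) xi F(2)] .
      have a2: "(i,2) \<notin> F" using empty_nb(1)[OF k(1) i' F(1) e] pvi by simp
      have a0: "(nx k i,0) \<notin> F" using e by (auto simp: dia_def)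
      have nonE: "F \<inter> dia i \<noteq> {}" using x F(2) by blast
      have "(i,1)\<in>F \<and> (i,3)\<in>F" using bd_in2[OF k F(1) a2 a0 nonE] .
      then show "\<exists>F. S \<inter> F = {x} \<and> (i,1)\<in>F \<and> (i,3)\<in>F \<and> (i,2)\<notin>F" using F(2) a2 by blast
    qed simp
    then show False using 2 by simp
  qed
qed

lemma sum_shift:
  assumes k: "k \<ge> 2"
  shows "(\<Sum>i<k. f (nx k i)) = (\<Sum>i<k. (f i :: nat))"
proof -
  have "bij_betw (nx k) {..<k} {..<k}"
  proof (rule bij_betw_imageI)
    show "inj_on (nx k) {..<k}"
    proof (rule inj_onI)
      fix a b assume ab: "a \<in> {..<k}" "b \<in> {..<k}" "nx k a = nx k b"
      have "pv k (nx k a) = pv k (nx k b)" using ab(3) by simp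
      then show "a = b" using pv_nx[OF k, of a] pv_nx[OF k, of b] ab(1,2) by simp
    qed
    show "nx k ` {..<k} = {..<k}"
    proof
      show "nx k ` {..<k} \<subseteq> {..<k}" using nx_lt[OF k] by auto
      show "{..<k} \<subseteq> nx k ` {..<k}"
      proof
        fix i assume "i \<in> {..<k}"
        then have "i = nx k (pv k i)" "pv k i \<in> {..<k}" using nx_pv[OF k] pv_lt[OF k] by auto
        then show "i \<in> nx k ` {..<k}" by blast
      qed
    qed
  qed
  then show ?thesis using sum.reindex_bij_betw[of "nx k" "{..<k}" "{..<k}" f] by simp
qed

lemma zir_bound:
  assumes k: "k \<ge> 2" and Z: "zir_set (necklace_V k) (necklace_E k) S"
  shows "card S \<le> 2 * k"
proof -
  have SV: "S \<subseteq> necklace_V k" using Z by (simp add: zir_set_def)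
  have Seq: "S = (\<Union>i\<in>{..<k}. S \<inter> dia i)"
    using SV by (auto simp: necklace_V_def dia_def)
  have "card (\<Union>i\<in>{..<k}. S \<inter> dia i) = (\<Sum>i<k. card (S \<inter> dia i))"
    by (rule card_UN_disjoint) (auto simp: dia_def)
  then have cS: "card S = (\<Sum>i<k. card (S \<inter> dia i))" using Seq by simp
  have "(\<Sum>i<k. card (S \<inter> dia i) + card (S \<inter> dia (nx k i))) \<le> (\<Sum>i<k. 4)"
    by (rule sum_mono) (use pair[OF k _ Z] in auto)
  moreover have "(\<Sum>i<k. card (S \<inter> dia i) + card (S \<inter> dia (nx k i))) = 2 * card S"
    using sum_shift[OF k, of "\<lambda>i. card (S \<inter> dia i)"] cS by (simp add: sum.distrib)
  ultimately show ?thesis by simp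
qed


lemma nb_sub:
  assumes k: "k \<ge> 2" "j < k" "s < 4"
  shows "nbhd (necklace_E k) (j,s) \<subseteq> dia j \<union> {(pv k j,2),(nx k j,0)}"
proof -
  have "s = 0 \<or> s = 1 \<or> s = 2 \<or> s = 3" using k(3) by arith
  then show ?thesis using nb0[OF k(1,2)] nb1[OF k(1,2)] nb2[OF k(1,2)] nb3[OF k(1,2)]
    by (auto simp: dia_def)
qed

lemma fortB:
  assumes k: "k \<ge> 2" "i < k"
  shows "is_fort (necklace_V k) (necklace_E k) {(i,1),(i,3)}"
  unfolding is_fort_def
proof (intro conjI ballI)
  show "{(i,1),(i,3)} \<noteq> {}" by simp
  show "{(i,1),(i,3)} \<subseteq> necklace_V k" using k by (simp add: necklace_V_def)
  fix v assume v: "v \<in> necklace_V k - {(i,1),(i,3)}"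
  then obtain j s where vs: "v = (j,s)" "j<k" "s<4" by (auto simp: necklace_V_def)
  show "card (nbhd (necklace_E k) v \<inter> {(i,1),(i,3)}) \<noteq> 1"
  proof (cases "j = i")
    case False
    have "nbhd (necklace_E k) v \<inter> {(i,1),(i,3)} = {}"
      using nb_sub[OF k(1) vs(2,3)] vs(1) False by (auto simp: dia_def)
    then show ?thesis by simp
  next
    case True
    have "s = 0 \<or> s = 2" using v vs True by auto
    then have "nbhd (necklace_E k) v \<inter> {(i,1),(i,3)} = {(i,1),(i,3)}"
      using nb0[OF k] nb2[OF k] vs(1) True by auto
    then show ?thesis by simp
  qed
qed

definition fC :: "nat \<Rightarrow> nat \<Rightarrow> (nat \<times> nat) set" where
  "fC k i = {v \<in> necklace_V k. snd v = 0 \<or> (fst v = i \<and> snd v = 2) \<or> (fst v \<noteq> i \<and> snd v = 3)}"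

lemma fC_mem: "(j,s) \<in> fC k i \<longleftrightarrow> j < k \<and> s < 4 \<and> (s = 0 \<or> (j = i \<and> s = 2) \<or> (j \<noteq> i \<and> s = 3))"
  by (auto simp: fC_def necklace_V_def)

lemma fortC:
  assumes k: "k \<ge> 2" "i < k"
  shows "is_fort (necklace_V k) (necklace_E k) (fC k i)"
  unfolding is_fort_def
proof (intro conjI ballI)
  have "(i,0) \<in> fC k i" using k by (simp add: fC_mem)
  then show "fC k i \<noteq> {}" by blast
  show "fC k i \<subseteq> necklace_V k" unfolding fC_def by blast
  fix v assume v: "v \<in> necklace_V k - fC k i"
  then obtain j s where vs: "v = (j,s)" "j<k" "s<4" by (auto simp: necklace_V_def)
  have nf: "(j,s) \<notin> fC k i" using v vs by simp
  show "card (nbhd (necklace_E k) v \<inter> fC k i) \<noteq> 1"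
  proof (cases "j = i")
    case True
    have "s \<noteq> 0" "s \<noteq> 2" using nf vs True by (auto simp: fC_mem)
    then have s13: "s = 1 \<or> s = 3" using vs(3) by arith
    have "nbhd (necklace_E k) v \<inter> fC k i = {(i,0),(i,2)}"
    proof (cases "s = 1")
      case s1: True
      have "nbhd (necklace_E k) v = {(i,0),(i,2),(i,3)}" using nb1[OF k] vs(1) True s1 by simp
      moreover have "{(i,0),(i,2),(i,3)} \<inter> fC k i = {(i,0),(i,2)}" using k by (auto simp: fC_mem)
      ultimately show ?thesis by simp
    next
      case s1: False
      then have s3: "s = 3" using s13 by simp
      have "nbhd (necklace_E k) v = {(i,0),(i,1),(i,2)}" using nb3[OF k] vs(1) True s3 by simp
      moreover have "{(i,0),(i,1),(i,2)} \<inter> fC k i = {(i,0),(i,2)}" using k by (auto simp: fC_mem)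
      ultimately show ?thesis by simp
    qed
    then show ?thesis by simp
  next
    case False
    have "s \<noteq> 0" "s \<noteq> 3" using nf vs False by (auto simp: fC_mem)
    then have s: "s = 1 \<or> s = 2" using vs(3) by arith
    show ?thesis
    proof (cases "s = 1")
      case True
      then have "nbhd (necklace_E k) v = {(j,0),(j,2),(j,3)}" using nb1[OF k(1) vs(2)] vs(1) by simp
      moreover have "{(j,0),(j,2),(j,3)} \<inter> fC k i = {(j,0),(j,3)}" using vs(2) False by (auto simp: fC_mem)
      ultimately show ?thesis by simp
    next
      case F2: False
      then have "s = 2" using s by simp
      then have "nbhd (necklace_E k) v = {(j,1),(j,3),(nx k j,0)}" using nb2[OF k(1) vs(2)] vs(1) by simp
      moreover have "{(j,1),(j,3),(nx k j,0)} \<inter> fC k i = {(j,3),(nx k j,0)}"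
        using vs(2) False nx_lt[OF k(1), of j] by (auto simp: fC_mem)
      ultimately show ?thesis by simp
    qed
  qed
qed

lemma zir0:
  assumes k: "k \<ge> 2"
  shows "zir_set (necklace_V k) (necklace_E k) ({..<k} \<times> {1,2})"
  unfolding zir_set_def
proof (intro conjI ballI)
  show "{..<k} \<times> {1,2} \<subseteq> necklace_V k" by (auto simp: necklace_V_def)
  fix x assume x: "x \<in> {..<k} \<times> {1::nat,2}"
  then obtain i s where xs: "x = (i,s)" "i < k" "s = 1 \<or> s = 2" by auto
  show "\<exists>F. private_fort (necklace_V k) (necklace_E k) ({..<k} \<times> {1,2}) x F"
  proof (cases "s = 1")
    case True
    have "({..<k} \<times> {1,2}) \<inter> {(i,1),(i,3)} = {x}" using xs True by auto
    then show ?thesis using fortB[OF k xs(2)] unfolding private_fort_def by blast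
  next
    case False
    then have s2: "s = 2" using xs by simp
    have "({..<k} \<times> {1,2}) \<inter> fC k i = {x}" using xs s2 by (auto simp: fC_mem)
    then show ?thesis using fortC[OF k xs(2)] unfolding private_fort_def by blast
  qed
qed

theorem theorem4p4:
  fixes k :: nat
  assumes "k \<ge> 2"
  shows "ZIR (necklace_V k) (necklace_E k) = 2 * k \<and>
         2 * k * 2 = card (necklace_V k)"
proof
  show "2 * k * 2 = card (necklace_V k)" by (simp add: necklace_V_def card_cartesian_product)
  let ?S = "{..<k} \<times> {1::nat,2}"
  have Z0: "zir_set (necklace_V k) (necklace_E k) ?S" using zir0[OF assms] .
  have c0: "card ?S = 2 * k" by (simp add: card_cartesian_product)
  have finV: "finite (necklace_V k)" by (simp add: necklace_V_def)
  have M0: "maximal_zir_set (necklace_V k) (necklace_E k) ?S"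
    unfolding maximal_zir_set_def
  proof (intro conjI allI impI)
    show "zir_set (necklace_V k) (necklace_E k) ?S" using Z0 .
    fix T assume T: "zir_set (necklace_V k) (necklace_E k) T \<and> ?S \<subseteq> T"
    have finT: "finite T" using T finV by (auto simp: zir_set_def intro: finite_subset)
    have "card T \<le> 2 * k" using zir_bound[OF assms, of T] T by blast
    then have "card T \<le> card ?S" using c0 by simp
    moreover have "card ?S \<le> card T" using T by (intro card_mono[OF finT]) blast
    ultimately have "card ?S = card T" by (rule antisym[rotated])
    then show "T = ?S" using card_subset_eq[OF finT, of ?S] T by (metis (no_types))
  qed
  let ?A = "{card S | S. maximal_zir_set (necklace_V k) (necklace_E k) S}"
  have bnd: "\<And>y. y \<in> ?A \<Longrightarrow> y \<le> 2 * k"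
    using zir_bound[OF assms] by (auto simp: maximal_zir_set_def)
  have fin: "finite ?A" by (rule finite_subset[of _ "{..2*k}"]) (use bnd in auto)
  have mem: "2 * k \<in> ?A" using M0 c0 by force
  show "ZIR (necklace_V k) (necklace_E k) = 2 * k"
    unfolding ZIR_def by (rule Max_eqI[OF fin bnd mem])
qed

end
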